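(* Let $n \geq 2$ be an integer and let $T_n=\{(1\,2),(1\,3),\dots,(1\,n)\} \subseteq S_n$. For each integer $1 \leq \ell \leq n-1$, both $n-\ell$ and $-(n-\ell)$ are eigenvalues of the Cayley graph $X(S_n,T_n)$, each with multiplicity at least $\binom{n-2}{\ell-1}$. If $n\ge 4$, then $0$ is an eigenvalue of $X(S_n,T_n)$ with multiplicity at least $\binom{n-1}{2}$.
   Context: For a group $G$ and an inverse-closed subset $T\subseteq G$, the Cayley graph $X(G,T)$ is the (undirected) graph with vertex set $G$ and an edge $\{g,tg\}$ for each $g\in G$ and $t\in T$. The spectrum/eigenvalues of a graph are those of its adjacency matrix. $S_n$ is the symmetric group on $[n]=\{1,\dots,n\}$. *)

theory Defs
  imports "Jordan_Normal_Form.Char_Poly" "HOL-Combinatorics.Transposition" "HOL-Combinatorics.Permutations"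
begin

definition Sym :: "nat \<Rightarrow> (nat \<Rightarrow> nat) set" where
  "Sym n = {p. p permutes {1..n}}"

definition star_transp :: "nat \<Rightarrow> (nat \<Rightarrow> nat) set" where
  "star_transp n = {transpose 1 k | k. k \<in> {2..n}}"

definition vertex_enum :: "'a set \<Rightarrow> 'a list" where
  "vertex_enum V = (SOME vs. distinct vs \<and> set vs = V)"

text \<open>Adjacency matrix of the Cayley graph X(G,T): vertex set G, edge {g, t g} for g in G, t in T.
  Rows/columns are indexed by the enumeration of G; the spectrum does not depend on it.\<close>
definition cayley_adj_mat :: "('a \<Rightarrow> 'a) set \<Rightarrow> ('a \<Rightarrow> 'a) set \<Rightarrow> real mat" where
  "cayley_adj_mat G T = (let vs = vertex_enum G in
     mat (length vs) (length vs) (\<lambda>(i, j). if \<exists>t\<in>T. vs ! j = t \<circ> (vs ! i) then 1 else 0))"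

definition eig_mult :: "real mat \<Rightarrow> real \<Rightarrow> nat" where
  "eig_mult A x = order x (char_poly A)"

end

theory Submission
  imports Defs "Jordan_Normal_Form.Jordan_Normal_Form_Uniqueness" "Jordan_Normal_Form.Jordan_Normal_Form_Existence"
begin


lemma sum_list_min1_le: "(\<Sum>n\<leftarrow>xs. min (1::nat) n) \<le> sum_list xs"
  by (induct xs) auto

lemma card_le_order:
  fixes A :: "complex mat" and ev :: complex and v :: "'i \<Rightarrow> complex vec"
  assumes A: "A \<in> carrier_mat N N" and finI: "finite I"
    and vc: "\<And>i. i \<in> I \<Longrightarrow> v i \<in> carrier_vec N"
    and ve: "\<And>i. i \<in> I \<Longrightarrow> A *\<^sub>v v i = ev \<cdot>\<^sub>v v i"
    and tst: "\<And>i j. i \<in> I \<Longrightarrow> j \<in> I \<Longrightarrow> (\<Sum>k<N. w i k * v j $ k) \<noteq> 0 \<longleftrightarrow> i = j"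
  shows "card I \<le> Polynomial.order ev (char_poly A)"
proof -
  let ?C = "char_matrix A ev"
  have C: "?C \<in> carrier_mat N N" using A by simp
  interpret K: kernel N N ?C by (unfold_locales, rule C)
  have Cv: "?C *\<^sub>v v i = A *\<^sub>v v i + (-ev) \<cdot>\<^sub>v v i" if "i \<in> I" for i
    unfolding char_matrix_def using A vc[OF that]
    by (intro eq_vecI, auto simp: add_scalar_prod_distrib[of _ N])
  have inker: "v i \<in> mat_kernel ?C" if i: "i \<in> I" for i
  proof (rule mat_kernelI[OF C vc[OF i]])
    show "?C *\<^sub>v v i = 0\<^sub>v N" unfolding Cv[OF i] ve[OF i] using vc[OF i]
      by (intro eq_vecI, auto simp: algebra_simps)
  qed
  have inj: "inj_on v I"
  proof (rule inj_onI)
    fix i j assume i: "i \<in> I" and j: "j \<in> I" and e: "v i = v j"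
    from tst[OF i i] e tst[OF i j] show "i = j" by auto
  qed
  let ?S = "v ` I"
  have Sk: "?S \<subseteq> mat_kernel ?C" using inker by auto
  have li: "K.lin_indpt ?S"
  proof (rule K.Ker.finite_lin_indpt2)
    show "finite ?S" using finI by simp
    show "?S \<subseteq> mat_kernel ?C" by (rule Sk)
    fix a assume "a \<in> ?S \<rightarrow> UNIV" and lc: "K.lincomb a ?S = 0\<^sub>v N"
    show "\<forall>x\<in>?S. a x = 0"
    proof
      fix x assume "x \<in> ?S"
      then obtain i where i: "i \<in> I" and x: "x = v i" by auto
      have "0 = (\<Sum>k<N. w i k * K.lincomb a ?S $ k)" unfolding lc by simp
      also have "\<dots> = (\<Sum>k<N. w i k * (\<Sum>y\<in>?S. a y * y $ k))"
        by (rule sum.cong[OF refl], subst K.lincomb_index[OF _ Sk], auto)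
      also have "\<dots> = (\<Sum>y\<in>?S. a y * (\<Sum>k<N. w i k * y $ k))"
        by (simp add: sum_distrib_left sum_distrib_right mult.assoc mult.left_commute sum.swap[of _ "{..<N}"])
      also have "\<dots> = (\<Sum>j\<in>I. a (v j) * (\<Sum>k<N. w i k * v j $ k))"
        by (subst sum.reindex[OF inj], simp)
      also have "\<dots> = a (v i) * (\<Sum>k<N. w i k * v i $ k)"
        by (subst sum.remove[OF finI i], subst sum.neutral, insert tst[OF i], auto)
      finally show "a x = 0" using tst[OF i i] x by simp
    qed
  qed
  obtain B where B: "finite B" "kernel.basis N ?C B" using kernel_basis_exists[OF C] by auto
  have fd: "K.Ker.fin_dim" unfolding K.Ker.fin_dim_def using B unfolding K.Ker.basis_def by auto
  have "card I = card ?S" using card_image[OF inj] by simp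
  also have "\<dots> \<le> K.Ker.dim" using K.Ker.li_le_dim(2)[OF fd Sk li] .
  also have "\<dots> = kernel_dim ?C" by simp
  also have "\<dots> = dim_gen_eigenspace A ev 1" unfolding dim_gen_eigenspace_def using C by simp
  also have "\<dots> \<le> Polynomial.order ev (char_poly A)"
  proof -
    from char_poly_factorized[OF A] obtain as where "char_poly A = (\<Prod>a\<leftarrow>as. [:- a, 1:])" by auto
    from jordan_nf_exists[OF A this] obtain n_as where jnf: "jordan_nf A n_as" by auto
    show ?thesis unfolding dim_gen_eigenspace[OF jnf] jordan_nf_order[OF jnf]
      using sum_list_min1_le[of "map fst (filter (\<lambda>na. snd na = ev) n_as)"]
      by (simp add: case_prod_unfold)
  qed
  finally show ?thesis .
qed


lemma card_le_order_real:
  fixes A :: "real mat" and ev :: real and v :: "'i \<Rightarrow> real vec"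
  assumes A: "A \<in> carrier_mat N N" and finI: "finite I"
    and vc: "\<And>i. i \<in> I \<Longrightarrow> v i \<in> carrier_vec N"
    and ve: "\<And>i. i \<in> I \<Longrightarrow> A *\<^sub>v v i = ev \<cdot>\<^sub>v v i"
    and tst: "\<And>i j. i \<in> I \<Longrightarrow> j \<in> I \<Longrightarrow> (\<Sum>k<N. w i k * v j $ k) \<noteq> 0 \<longleftrightarrow> i = j"
  shows "card I \<le> Polynomial.order ev (char_poly A)"
proof -
  let ?h = "complex_of_real"
  have "card I \<le> Polynomial.order (?h ev) (char_poly (map_mat ?h A))"
  proof (rule card_le_order[where v = "\<lambda>i. map_vec ?h (v i)" and w = "\<lambda>i k. ?h (w i k)"])
    show "map_mat ?h A \<in> carrier_mat N N" using A by simp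
    show "finite I" by fact
    fix i assume i: "i \<in> I"
    show "map_vec ?h (v i) \<in> carrier_vec N" using vc[OF i] by simp
    show "map_mat ?h A *\<^sub>v map_vec ?h (v i) = ?h ev \<cdot>\<^sub>v map_vec ?h (v i)"
      using of_real_hom.mult_mat_vec_hom[OF A vc[OF i]] ve[OF i] of_real_hom.vec_hom_smult by metis
    fix j assume j: "j \<in> I"
    have "(\<Sum>k<N. ?h (w i k) * map_vec ?h (v j) $ k) = ?h (\<Sum>k<N. w i k * v j $ k)"
      unfolding of_real_sum of_real_mult using vc[OF j] by (intro sum.cong, auto)
    thus "((\<Sum>k<N. ?h (w i k) * map_vec ?h (v j) $ k) \<noteq> 0) = (i = j)"
      using tst[OF i j] by (simp only: of_real_eq_0_iff)
  qed
  also have "char_poly (map_mat ?h A) = map_poly ?h (char_poly A)"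
    by (rule of_real_hom.char_poly_hom[OF A])
  also have "Polynomial.order (?h ev) (map_poly ?h (char_poly A)) = Polynomial.order ev (char_poly A)"
  proof -
    interpret map_poly_inj_idom_divide_hom ?h ..
    show ?thesis by (rule order_hom)
  qed
  finally show ?thesis .
qed


definition Lsum :: "nat \<Rightarrow> ((nat \<Rightarrow> nat) \<Rightarrow> real) \<Rightarrow> (nat \<Rightarrow> nat) \<Rightarrow> real" where
  "Lsum n \<phi> g = (\<Sum>k\<in>{2..n}. \<phi> (transpose 1 k \<circ> g))"

lemma finite_Sym: "finite (Sym n)"
  unfolding Sym_def by (rule finite_permutations) simp

lemma vertex_enum_Sym: "distinct (vertex_enum (Sym n)) \<and> set (vertex_enum (Sym n)) = Sym n"
  unfolding vertex_enum_def
  by (rule someI_ex, insert finite_distinct_list[OF finite_Sym], auto)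

lemma star_transp_eq: "star_transp n = (\<lambda>k. transpose 1 k) ` {2..n}"
  by (auto simp: star_transp_def)

lemma transp_comp_Sym: "g \<in> Sym n \<Longrightarrow> k \<in> {2..n} \<Longrightarrow> transpose 1 k \<circ> g \<in> Sym n"
  unfolding Sym_def by (auto intro!: permutes_compose permutes_swap_id)

lemma inj_transp_comp: assumes g: "g \<in> Sym n" shows "inj_on (\<lambda>k. transpose 1 k \<circ> g) {2..n}"
proof (rule inj_onI)
  fix k k' assume k: "k \<in> {2..n}" and k': "k' \<in> {2..n}" and e: "transpose 1 k \<circ> g = transpose 1 k' \<circ> g"
  from g have "g ` {1..n} = {1..n}" unfolding Sym_def by (simp add: permutes_image)
  moreover have "1 \<in> {1..n}" using k by auto
  ultimately obtain x where x: "g x = 1" by (metis imageE)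
  from fun_cong[OF e, of x] x show "k = k'" by auto
qed

lemma row_sum: fixes F :: "(nat \<Rightarrow> nat) \<Rightarrow> real" assumes g: "g \<in> Sym n"
  shows "(\<Sum>h\<in>Sym n. (if \<exists>t\<in>star_transp n. h = t \<circ> g then 1 else 0) * F h)
     = (\<Sum>k\<in>{2..n}. F (transpose 1 k \<circ> g))"
proof -
  let ?img = "(\<lambda>k. transpose 1 k \<circ> g) ` {2..n}"
  have sub: "?img \<subseteq> Sym n" using transp_comp_Sym[OF g] by auto
  have eq: "{h. \<exists>t\<in>star_transp n. h = t \<circ> g} = ?img" unfolding star_transp_eq by auto
  have "(\<Sum>h\<in>Sym n. (if \<exists>t\<in>star_transp n. h = t \<circ> g then 1 else 0) * F h)
      = (\<Sum>h\<in>Sym n. (if h \<in> ?img then F h else 0))"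
    by (rule sum.cong[OF refl], insert eq, auto)
  also have "\<dots> = (\<Sum>h\<in>Sym n \<inter> ?img. F h)" by (rule sum.inter_restrict[symmetric, OF finite_Sym])
  also have "Sym n \<inter> ?img = ?img" using sub by auto
  also have "(\<Sum>h\<in>?img. F h) = (\<Sum>k\<in>{2..n}. F (transpose 1 k \<circ> g))"
    using sum.reindex[OF inj_transp_comp[OF g], of F] by (simp add: o_def)
  finally show ?thesis .
qed

lemma mult_bound:
  fixes \<phi> \<psi> :: "'i \<Rightarrow> (nat \<Rightarrow> nat) \<Rightarrow> real"
  assumes finI: "finite I"
    and eig: "\<And>i g. i \<in> I \<Longrightarrow> g \<in> Sym n \<Longrightarrow> Lsum n (\<phi> i) g = ev * \<phi> i g"
    and tst: "\<And>i j. i \<in> I \<Longrightarrow> j \<in> I \<Longrightarrow> (\<Sum>g\<in>Sym n. \<psi> i g * \<phi> j g) \<noteq> 0 \<longleftrightarrow> i = j"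
  shows "card I \<le> eig_mult (cayley_adj_mat (Sym n) (star_transp n)) ev"
proof -
  define vs where "vs = vertex_enum (Sym n)"
  define N where "N = length vs"
  have vs: "distinct vs" "set vs = Sym n" using vertex_enum_Sym[of n] unfolding vs_def by auto
  have bij: "bij_betw ((!) vs) {..<N} (Sym n)" by (rule bij_betw_nth, insert vs, auto simp: N_def)
  have Adef: "cayley_adj_mat (Sym n) (star_transp n) = mat N N (\<lambda>(i,j). if \<exists>t\<in>star_transp n. vs!j = t \<circ> vs!i then 1 else 0)"
    unfolding cayley_adj_mat_def vs_def N_def Let_def ..
  define A where "A = cayley_adj_mat (Sym n) (star_transp n)"
  have A: "A \<in> carrier_mat N N" unfolding A_def Adef by simp
  have vsS: "vs ! r \<in> Sym n" if "r < N" for r using vs that unfolding N_def by auto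
  show ?thesis unfolding eig_mult_def A_def[symmetric]
  proof (rule card_le_order_real[OF A finI, where v = "\<lambda>i. vec N (\<lambda>k. \<phi> i (vs!k))" and w = "\<lambda>i k. \<psi> i (vs!k)"])
    fix i assume i: "i \<in> I"
    show "vec N (\<lambda>k. \<phi> i (vs!k)) \<in> carrier_vec N" by simp
    show "A *\<^sub>v vec N (\<lambda>k. \<phi> i (vs!k)) = ev \<cdot>\<^sub>v vec N (\<lambda>k. \<phi> i (vs!k))"
    proof (rule eq_vecI)
      fix r assume "r < dim_vec (ev \<cdot>\<^sub>v vec N (\<lambda>k. \<phi> i (vs!k)))"
      hence r: "r < N" by simp
      have "(A *\<^sub>v vec N (\<lambda>k. \<phi> i (vs!k))) $ r
          = (\<Sum>j<N. (if \<exists>t\<in>star_transp n. vs!j = t \<circ> vs!r then 1 else 0) * \<phi> i (vs!j))"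
        using r unfolding A_def Adef by (auto simp: scalar_prod_def lessThan_atLeast0 intro!: sum.cong)
      also have "\<dots> = (\<Sum>h\<in>Sym n. (if \<exists>t\<in>star_transp n. h = t \<circ> vs!r then 1 else 0) * \<phi> i h)"
        by (rule sum.reindex_bij_betw[OF bij])
      also have "\<dots> = Lsum n (\<phi> i) (vs!r)" unfolding Lsum_def by (rule row_sum[OF vsS[OF r]])
      also have "\<dots> = ev * \<phi> i (vs!r)" by (rule eig[OF i vsS[OF r]])
      finally show "(A *\<^sub>v vec N (\<lambda>k. \<phi> i (vs!k))) $ r = (ev \<cdot>\<^sub>v vec N (\<lambda>k. \<phi> i (vs!k))) $ r"
        using r by simp
    qed (insert A, auto)
    fix j assume j: "j \<in> I"
    have "(\<Sum>k<N. \<psi> i (vs!k) * vec N (\<lambda>k. \<phi> j (vs!k)) $ k) = (\<Sum>k<N. \<psi> i (vs!k) * \<phi> j (vs!k))"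
      by (rule sum.cong, auto)
    also have "\<dots> = (\<Sum>g\<in>Sym n. \<psi> i g * \<phi> j g)" by (rule sum.reindex_bij_betw[OF bij])
    finally show "((\<Sum>k<N. \<psi> i (vs!k) * vec N (\<lambda>k. \<phi> j (vs!k)) $ k) \<noteq> 0) = (i = j)"
      using tst[OF i j] by simp
  qed
qed



definition Hz :: "nat \<Rightarrow> bool \<Rightarrow> bool \<Rightarrow> real" where
  "Hz n a b = (if b then - (real n - 3) else 1) * ((real n - 1) * (if a then 1 else 0) - 2 + (if b then 1 else 0))"

definition phiz :: "nat \<Rightarrow> nat \<times> nat \<Rightarrow> (nat \<Rightarrow> nat) \<Rightarrow> real" where
  "phiz n pu g = Hz n (snd pu \<in> g ` {1, fst pu}) (1 \<in> g ` {1, fst pu})"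

lemma in_transpose_image: "x \<in> transpose a b ` X \<longleftrightarrow> transpose a b x \<in> X"
  by (metis image_iff transpose_apply_first transpose_apply_other transpose_apply_second transpose_involutory)

lemma Sym_inj: "g \<in> Sym n \<Longrightarrow> inj g"
  unfolding Sym_def by (auto intro: permutes_inj)

lemma Sym_range: "g \<in> Sym n \<Longrightarrow> x \<in> {1..n} \<Longrightarrow> g x \<in> {1..n}"
  unfolding Sym_def by (metis mem_Collect_eq permutes_in_image)

lemma sum_bool_split: "finite K \<Longrightarrow> (\<Sum>k\<in>K. f (k \<in> X)) = real (card (K \<inter> X)) * f True + real (card (K - X)) * (f False :: real)"
proof -
  assume K: "finite K"
  have "(\<Sum>k\<in>K. f (k \<in> X)) = (\<Sum>k\<in>K. if k \<in> X then f True else f False)" by (rule sum.cong, auto)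
  also have "\<dots> = (\<Sum>k\<in>K \<inter> X. f True) + (\<Sum>k\<in>K - X. f False)"
    using sum.If_cases[OF K, of "\<lambda>k. k \<in> X" "\<lambda>_. f True" "\<lambda>_. f False"]
    by (simp add: Diff_eq Int_def)
  finally show ?thesis by simp
qed

lemma phiz_eig:
  assumes p: "p \<in> {2..n}" and u: "u \<in> {2..n}" and g: "g \<in> Sym n"
  shows "Lsum n (phiz n (p, u)) g = 0 * phiz n (p, u) g"
proof -
  define X where "X = g ` {1, p}"
  define a where "a = (u \<in> X)"
  define b where "b = (1 \<in> X)"
  have Xsub: "X \<subseteq> {1..n}" unfolding X_def using Sym_range[OF g] p by auto
  have cX: "card X = 2" unfolding X_def using Sym_inj[OF g] p
    by (subst card_image, auto simp: inj_on_def)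
  have finX: "finite X" unfolding X_def by simp
  have trm: "phiz n (p,u) (transpose 1 k \<circ> g) = Hz n (if k = u then b else a) (k \<in> X)" if k: "k \<in> {2..n}" for k
  proof -
    have img: "(transpose 1 k \<circ> g) ` {1,p} = transpose 1 k ` X" unfolding X_def by (simp add: image_comp)
    show ?thesis unfolding phiz_def fst_conv snd_conv img in_transpose_image a_def b_def
      using k u by (auto simp: transpose_def)
  qed
  define K where "K = {2..n} - {u}"
  have "Lsum n (phiz n (p, u)) g = (\<Sum>k\<in>{2..n}. Hz n (if k = u then b else a) (k \<in> X))"
    unfolding Lsum_def by (rule sum.cong[OF refl], rule trm)
  also have "\<dots> = Hz n b a + (\<Sum>k\<in>K. Hz n a (k \<in> X))"
    unfolding K_def using u by (subst sum.remove[of _ u], auto simp: a_def intro!: sum.cong)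
  also have "(\<Sum>k\<in>K. Hz n a (k \<in> X)) = real (card (K \<inter> X)) * Hz n a True + real (card (K - X)) * Hz n a False"
    by (rule sum_bool_split, simp add: K_def)
  finally have L: "Lsum n (phiz n (p, u)) g = Hz n b a + real (card (K \<inter> X)) * Hz n a True + real (card (K - X)) * Hz n a False"
    by simp
  have KX: "K \<inter> X = X - {1} - {u}" unfolding K_def using Xsub by auto
  have c1: "card (K \<inter> X) + (if a then 1 else 0) + (if b then 1 else 0) = 2"
  proof -
    have XU: "X = (K \<inter> X) \<union> (X \<inter> {1,u})" using Xsub unfolding K_def by auto
    have "card X = card (K \<inter> X) + card (X \<inter> {1,u})"
      by (subst XU, rule card_Un_disjoint, insert finX, auto simp: K_def)
    moreover have "card (X \<inter> {1,u}) = (if a then 1 else 0) + (if b then 1 else 0)"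
      using u unfolding a_def b_def by (cases "u \<in> X"; cases "1 \<in> X", auto simp: Int_insert_right)
    ultimately show ?thesis using cX by simp
  qed
  have c2: "card (K \<inter> X) + card (K - X) = n - 2"
    using card_Int_Diff[of K X] unfolding K_def using u by auto
  have n2: "n \<ge> 2" using p by auto
  show ?thesis unfolding L
  proof (cases a; cases b)
    assume "a" "b"
    hence "card (K \<inter> X) = 0" "card (K - X) = n - 2" using c1 c2 by auto
    thus "Hz n b a + real (card (K \<inter> X)) * Hz n a True + real (card (K - X)) * Hz n a False = 0 * phiz n (p, u) g"
      using \<open>a\<close> \<open>b\<close> n2 by (simp add: Hz_def of_nat_diff algebra_simps)
  next
    assume "a" "\<not> b"
    hence "card (K \<inter> X) = 1" "card (K - X) = n - 3" using c1 c2 by auto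
    thus "Hz n b a + real (card (K \<inter> X)) * Hz n a True + real (card (K - X)) * Hz n a False = 0 * phiz n (p, u) g"
      using \<open>a\<close> \<open>\<not> b\<close> n2 c2 by (simp add: Hz_def of_nat_diff algebra_simps)
  next
    assume "\<not> a" "b"
    hence "card (K \<inter> X) = 1" "card (K - X) = n - 3" using c1 c2 by auto
    thus "Hz n b a + real (card (K \<inter> X)) * Hz n a True + real (card (K - X)) * Hz n a False = 0 * phiz n (p, u) g"
      using \<open>\<not> a\<close> \<open>b\<close> n2 c2 by (simp add: Hz_def of_nat_diff algebra_simps)
  next
    assume "\<not> a" "\<not> b"
    hence "card (K \<inter> X) = 2" "card (K - X) = n - 4" using c1 c2 by auto
    thus "Hz n b a + real (card (K \<inter> X)) * Hz n a True + real (card (K - X)) * Hz n a False = 0 * phiz n (p, u) g"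
      using \<open>\<not> a\<close> \<open>\<not> b\<close> n2 c2 by (simp add: Hz_def of_nat_diff algebra_simps)
  qed
qed


lemma cayley_carrier: "\<exists>N. cayley_adj_mat (Sym n) (star_transp n) \<in> carrier_mat N N"
  unfolding cayley_adj_mat_def Let_def by (intro exI, rule mat_carrier)

lemma eig_of_mult:
  assumes "1 \<le> eig_mult (cayley_adj_mat (Sym n) (star_transp n)) ev"
  shows "eigenvalue (cayley_adj_mat (Sym n) (star_transp n)) ev"
proof -
  obtain N where A: "cayley_adj_mat (Sym n) (star_transp n) \<in> carrier_mat N N" using cayley_carrier by blast
  have "char_poly (cayley_adj_mat (Sym n) (star_transp n)) \<noteq> 0"
    using degree_monic_char_poly[OF A] by auto
  hence "poly (char_poly (cayley_adj_mat (Sym n) (star_transp n))) ev = 0"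
    using assms unfolding eig_mult_def order_root by auto
  thus ?thesis using eigenvalue_root_char_poly[OF A] by simp
qed

definition psiz :: "nat \<Rightarrow> nat \<times> nat \<Rightarrow> (nat \<Rightarrow> nat) \<Rightarrow> real" where
  "psiz n pu g = (if g = transpose (fst pu) (snd pu) then 1 else 0)
      - (if g = transpose (snd pu) n \<circ> transpose (fst pu) (snd pu) then 1 else 0)"

lemma phiz_vals:
  assumes n: "n \<ge> 4" and p: "p \<in> {2..n-1}" and u: "u \<in> {2..n-1}" and p': "p' \<in> {2..n-1}" and u': "u' \<in> {2..n-1}"
  shows "phiz n (p',u') (transpose p u) - phiz n (p',u') (transpose u n \<circ> transpose p u)
    = (if (p',u') = (p,u) then Hz n True True - Hz n False True else 0)"
proof -
  let ?g1 = "transpose p u"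
  have i1: "?g1 1 = 1" "transpose u n 1 = 1" using p u by (auto simp: transpose_def)
  have g1: "phiz n (p',u') ?g1 = Hz n (u' = ?g1 p') True"
    unfolding phiz_def using i1 u' by auto
  have g2: "phiz n (p',u') (transpose u n \<circ> ?g1) = Hz n (u' = transpose u n (?g1 p')) True"
    unfolding phiz_def using i1 u' by auto
  show ?thesis
  proof (cases "p' = p")
    case True
    have "u \<noteq> n" "u' \<noteq> n" using u u' n by auto
    thus ?thesis unfolding g1 g2 using True by (auto simp: transpose_def)
  next
    case False
    have "?g1 p' \<noteq> u" "?g1 p' \<noteq> n" using False p u p' by (auto simp: transpose_def)
    hence "transpose u n (?g1 p') = ?g1 p'" by (auto simp: transpose_def)
    thus ?thesis unfolding g1 g2 using False by auto
  qed
qed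

lemma psiz_sum:
  assumes n: "n \<ge> 4" and p: "p \<in> {2..n-1}" and u: "u \<in> {2..n-1}" and p': "p' \<in> {2..n-1}" and u': "u' \<in> {2..n-1}"
  shows "(\<Sum>g\<in>Sym n. psiz n (p,u) g * phiz n (p',u') g) \<noteq> 0 \<longleftrightarrow> (p,u) = (p',u')"
proof -
  let ?g1 = "transpose p u" and ?g2 = "transpose u n \<circ> transpose p u"
  have g1: "?g1 \<in> Sym n" unfolding Sym_def using p u by (auto intro!: permutes_swap_id)
  have g2: "?g2 \<in> Sym n" unfolding Sym_def using p u n by (auto intro!: permutes_swap_id permutes_compose)
  have "(\<Sum>g\<in>Sym n. psiz n (p,u) g * phiz n (p',u') g)
     = (\<Sum>g\<in>Sym n. (if g = ?g1 then phiz n (p',u') g else 0)) - (\<Sum>g\<in>Sym n. (if g = ?g2 then phiz n (p',u') g else 0))"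
    unfolding psiz_def fst_conv snd_conv sum_subtractf[symmetric] by (rule sum.cong, auto simp: algebra_simps)
  also have "\<dots> = phiz n (p',u') ?g1 - phiz n (p',u') ?g2"
    using g1 g2 by (simp add: sum.delta[OF finite_Sym])
  also have "\<dots> = (if (p',u') = (p,u) then Hz n True True - Hz n False True else 0)"
    by (rule phiz_vals[OF assms])
  also have "Hz n True True - Hz n False True = - ((real n - 3) * (real n - 1))"
    by (simp add: Hz_def algebra_simps)
  finally show ?thesis using n by auto
qed

lemma zero_part:
  assumes n: "n \<ge> 4"
  shows "eigenvalue (cayley_adj_mat (Sym n) (star_transp n)) 0 \<and>
         eig_mult (cayley_adj_mat (Sym n) (star_transp n)) 0 \<ge> (n - 1) choose 2"
proof -
  let ?I = "{2..n-1} \<times> {2..n-1}"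
  have "card ?I \<le> eig_mult (cayley_adj_mat (Sym n) (star_transp n)) 0"
  proof (rule mult_bound[where \<phi> = "phiz n" and \<psi> = "psiz n"])
    show "finite ?I" by simp
    fix i g assume i: "i \<in> ?I" and g: "g \<in> Sym n"
    obtain p u where pu: "i = (p,u)" by force
    show "Lsum n (phiz n i) g = 0 * phiz n i g" unfolding pu
      by (rule phiz_eig, insert i pu g, auto)
  next
    fix i j assume i: "i \<in> ?I" and j: "j \<in> ?I"
    obtain p u where pu: "i = (p,u)" by force
    obtain p' u' where pu': "j = (p',u')" by force
    show "((\<Sum>g\<in>Sym n. psiz n i g * phiz n j g) \<noteq> 0) = (i = j)" unfolding pu pu'
      by (rule psiz_sum, insert n i j pu pu', auto)
  qed
  moreover have "card ?I = (n-2) * (n-2)" by (simp add: card_cartesian_product numeral_2_eq_2)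
  moreover have "(n - 1) choose 2 \<le> (n-2) * (n-2)"
  proof -
    have "(n - 1) choose 2 = (n-1) * (n-1-1) div 2" by (rule choose_two)
    also have "n - 1 - 1 = n - 2" by simp
    finally have "(n - 1) choose 2 = (n-1) * (n-2) div 2" .
    also have "\<dots> \<le> (n-2) * (n-2)"
    proof -
      have "n - 1 \<le> 2 * (n-2)" using n by auto
      hence "(n-1) * (n-2) \<le> (2 * (n-2)) * (n-2)" by (rule mult_le_mono1)
      hence le2: "(n-1) * (n-2) \<le> 2 * ((n-2) * (n-2))" by (simp add: mult.assoc)
      show ?thesis using div_le_mono[OF le2, of 2] by simp
    qed
    finally show ?thesis .
  qed
  ultimately have le: "(n - 1) choose 2 \<le> eig_mult (cayley_adj_mat (Sym n) (star_transp n)) 0" by linarith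
  moreover have "1 \<le> (n - 1) choose 2"
  proof -
    have "2 \<le> n - 1" using n by simp
    from zero_less_binomial[OF this] show ?thesis by linarith
  qed
  ultimately show ?thesis using eig_of_mult[of n 0] by auto
qed



lemma perm_extend:
  assumes fin: "finite S" and D: "D \<subseteq> S" and inj: "inj_on f D" and img: "f ` D \<subseteq> S"
  shows "\<exists>g. g permutes S \<and> (\<forall>x\<in>D. g x = f x)"
proof -
  have finD: "finite D" using fin D finite_subset by auto
  have "card (S - D) = card (S - f ` D)"
    using card_Diff_subset[OF finD D] card_Diff_subset[OF finite_imageI[OF finD] img] card_image[OF inj] by simp
  then obtain h where h: "bij_betw h (S - D) (S - f ` D)"
    using finite_same_card_bij[of "S - D" "S - f ` D"] fin by auto
  define g where "g x = (if x \<in> D then f x else if x \<in> S then h x else x)" for x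
  have b1: "bij_betw g D (f ` D)"
    by (rule bij_betw_cong[THEN iffD2, of _ _ f], auto simp: g_def inj_on_imp_bij_betw[OF inj])
  have b2: "bij_betw g (S - D) (S - f ` D)"
    by (rule bij_betw_cong[THEN iffD2, of _ _ h], auto simp: g_def h)
  have "bij_betw g (D \<union> (S - D)) (f ` D \<union> (S - f ` D))" by (rule bij_betw_combine[OF b1 b2], auto)
  moreover have "D \<union> (S - D) = S" "f ` D \<union> (S - f ` D) = S" using D img by auto
  ultimately have bij: "bij_betw g S S" by simp
  have "g permutes S" by (rule bij_imp_permutes[OF bij], insert D, auto simp: g_def)
  thus ?thesis by (auto simp: g_def)
qed

lemma det_zero_row: assumes A: "A \<in> carrier_mat N N" and i: "i < N" and z: "\<And>j. j < N \<Longrightarrow> A $$ (i,j) = 0"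
  shows "det A = 0"
  unfolding det_def'[OF A]
proof (rule sum.neutral, intro ballI)
  fix p assume "p \<in> {p. p permutes {0..<N}}"
  hence p: "p permutes {0..<N}" by simp
  have "p i < N" using permutes_in_image[OF p, of i] i by simp
  hence "(\<Prod>i = 0..<N. A $$ (i, p i)) = 0" by (intro prod_zero, simp, intro bexI[of _ i], auto simp: z i)
  thus "signof p * (\<Prod>i = 0..<N. A $$ (i, p i)) = 0" by simp
qed

definition Mx :: "nat list \<Rightarrow> nat \<Rightarrow> (nat \<Rightarrow> nat) \<Rightarrow> real mat" where
  "Mx wl m f = mat (Suc m) (Suc m) (\<lambda>(i,c). if i = 0 then 1 else if f i = wl ! c then 1 else 0)"

lemma Mx_carrier: "Mx wl m f \<in> carrier_mat (Suc m) (Suc m)" unfolding Mx_def by simp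

lemma Mx_zero: assumes len: "length wl = Suc m" and i: "i \<in> {1..m}" and fi: "f i \<notin> set wl"
  shows "det (Mx wl m f) = 0"
  by (rule det_zero_row[OF Mx_carrier, of i], insert i fi len, auto simp: Mx_def)

lemma Mx_local: assumes "\<And>i. i \<in> {1..m} \<Longrightarrow> f i = f' i"
  shows "Mx wl m f = Mx wl m f'"
  unfolding Mx_def by (rule eq_matI, insert assms, auto)

lemma Mx_swap:
  assumes len: "length wl = Suc m" and dist: "distinct wl"
    and k12: "k1 \<noteq> k2" "k1 \<in> set wl" "k2 \<in> set wl" and i0: "i0 \<in> {1..m}"
    and f1: "f1 i0 = k1" and f2: "f2 i0 = k2"
    and oth: "\<And>i. i \<in> {1..m} \<Longrightarrow> i \<noteq> i0 \<Longrightarrow> f1 i = f2 i \<and> f1 i \<noteq> k1 \<and> f1 i \<noteq> k2"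
  shows "det (Mx wl m f1) + det (Mx wl m f2) = 0"
proof -
  obtain c1 where c1: "c1 < Suc m" "wl ! c1 = k1" using k12 len by (metis in_set_conv_nth)
  obtain c2 where c2: "c2 < Suc m" "wl ! c2 = k2" using k12 len by (metis in_set_conv_nth)
  have c12: "c1 \<noteq> c2" using c1 c2 k12 by auto
  have nth_eq: "wl ! c = wl ! c' \<longleftrightarrow> c = c'" if "c < Suc m" "c' < Suc m" for c c'
    using nth_eq_iff_index_eq[OF dist] that len by auto
  have eq: "Mx wl m f2 = swapcols c1 c2 (Mx wl m f1)"
  proof (rule eq_matI)
    fix i c assume i: "i < dim_row (swapcols c1 c2 (Mx wl m f1))" and c: "c < dim_col (swapcols c1 c2 (Mx wl m f1))"
    hence i': "i < Suc m" and c': "c < Suc m" using Mx_carrier[of wl m f1] by auto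
    show "Mx wl m f2 $$ (i, c) = swapcols c1 c2 (Mx wl m f1) $$ (i, c)"
    proof (cases "i = 0")
      case True thus ?thesis using i' c' c1 c2 by (simp add: Mx_def)
    next
      case False
      hence iI: "i \<in> {1..m}" using i' by auto
      show ?thesis
      proof (cases "i = i0")
        case True
        thus ?thesis using i' c' c1 c2 f1 f2 nth_eq[OF c' c1(1)] nth_eq[OF c' c2(1)] c12 k12 False
          by (auto simp: Mx_def)
      next
        case ne: False
        from oth[OF iI ne] have o: "f1 i = f2 i" "f1 i \<noteq> k1" "f1 i \<noteq> k2" by auto
        thus ?thesis using i' c' c1 c2 False by (auto simp: Mx_def)
      qed
    qed
  qed (auto simp: Mx_def)
  have "det (Mx wl m f2) = - det (Mx wl m f1)" unfolding eq
    by (rule det_swapcols[OF c1(1) c2(1) c12 Mx_carrier])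
  thus ?thesis by simp
qed


definition wlS :: "nat set \<Rightarrow> nat list" where "wlS S = sorted_list_of_set (insert 2 S)"

definition phid :: "nat set \<Rightarrow> (nat \<Rightarrow> nat) \<Rightarrow> real" where
  "phid S g = det (Mx (wlS S) (card S) g)"

lemma tr_app: "transpose a b x = (if x = a then b else if x = b then a else x)"
  by (simp add: transpose_def)

lemma wlS_props: assumes S: "S \<subseteq> {3..n}"
  shows "set (wlS S) = insert 2 S" "distinct (wlS S)" "length (wlS S) = Suc (card S)" "2 \<notin> S" "finite S"
proof -
  have fin: "finite S" using S finite_subset by auto
  show "finite S" by fact
  show "2 \<notin> S" using S by auto
  show "set (wlS S) = insert 2 S" unfolding wlS_def by (rule set_sorted_list_of_set, simp add: fin)
  show "distinct (wlS S)" unfolding wlS_def by (rule distinct_sorted_list_of_set)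
  show "length (wlS S) = Suc (card S)" unfolding wlS_def
    by (simp only: length_sorted_list_of_set card_insert_disjoint[OF fin \<open>2 \<notin> S\<close>])
qed

lemma phid_eig:
  assumes S: "S \<subseteq> {3..n}" and g: "g \<in> Sym n" and n2: "n \<ge> 2"
  shows "Lsum n (phid S) g = (real n - 1 - real (card S)) * phid S g"
proof -
  define wl where "wl = wlS S"
  define m where "m = card S"
  define W where "W = insert 2 S"
  note wp = wlS_props[OF S, folded wl_def m_def W_def]
  have W2: "W \<subseteq> {2..n}" "1 \<notin> W" using S n2 unfolding W_def by auto
  have mle: "m \<le> n - 2" unfolding m_def using card_mono[OF _ S] by simp
  define Q where "Q = g ` {1..m}"
  have injg: "inj g" by (rule Sym_inj[OF g])
  have Qsub: "Q \<subseteq> {1..n}" unfolding Q_def using Sym_range[OF g] mle by auto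
  have cQ: "card Q = m"
  proof -
    have "inj_on g {1..m}" using injg by (rule inj_on_subset) simp
    thus ?thesis unfolding Q_def by (simp add: card_image)
  qed
  have LS: "Lsum n (phid S) g = (\<Sum>k\<in>{2..n}. det (Mx wl m (transpose 1 k \<circ> g)))"
    unfolding Lsum_def phid_def wl_def m_def ..
  have app: "(transpose 1 k \<circ> g) i = (if g i = 1 then k else if g i = k then 1 else g i)" for k i
    by (simp add: tr_app)
  show ?thesis
  proof (cases "1 \<in> Q")
    case False
    have each: "det (Mx wl m (transpose 1 k \<circ> g)) = (if k \<in> Q then 0 else phid S g)" if k: "k \<in> {2..n}" for k
    proof (cases "k \<in> Q")
      case True
      then obtain i where i: "i \<in> {1..m}" "g i = k" unfolding Q_def by auto
      have "det (Mx wl m (transpose 1 k \<circ> g)) = 0"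
        by (rule Mx_zero[OF wp(3) i(1)], insert i k W2 wp(1), auto simp: app tr_app)
      thus ?thesis using True by simp
    next
      case nk: False
      have "Mx wl m (transpose 1 k \<circ> g) = Mx wl m g"
      proof (rule Mx_local)
        fix i assume "i \<in> {1..m}"
        hence "g i \<in> Q" unfolding Q_def by auto
        thus "(transpose 1 k \<circ> g) i = g i" using False nk by (auto simp: app tr_app)
      qed
      thus ?thesis using nk unfolding phid_def wl_def m_def by simp
    qed
    have "Lsum n (phid S) g = (\<Sum>k\<in>{2..n}. (if k \<in> Q then 0 else phid S g))"
      unfolding LS by (rule sum.cong[OF refl each])
    also have "\<dots> = real (card ({2..n} - Q)) * phid S g"
      by (subst sum.If_cases, auto simp: Diff_eq)
    also have "card ({2..n} - Q) = (n - 1) - m"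
    proof -
      have "Q \<subseteq> {2..n}"
      proof
        fix x assume "x \<in> Q"
        with Qsub False have "x \<in> {1..n}" "x \<noteq> 1" by auto
        thus "x \<in> {2..n}" by auto
      qed
      from card_Diff_subset[OF _ this] cQ show ?thesis by (simp add: finite_subset[OF Qsub])
    qed
    finally have L: "Lsum n (phid S) g = real ((n - 1) - m) * phid S g" .
    have "Suc m \<le> n" using mle n2 by linarith
    hence "real ((n - 1) - m) = real n - 1 - real m" by (simp add: of_nat_diff)
    thus ?thesis using L unfolding m_def by simp
  next
    case True
    then obtain i0 where i0: "i0 \<in> {1..m}" "g i0 = 1" unfolding Q_def by auto
    have d0: "phid S g = 0" unfolding phid_def wl_def[symmetric] m_def[symmetric]
      by (rule Mx_zero[OF wp(3) i0(1)], insert i0 W2 wp(1), auto)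
    define R where "R = {1..m} - {i0}"
    have gR: "i \<in> R \<Longrightarrow> g i \<noteq> 1 \<and> g i \<in> Q" for i
    proof -
      assume i: "i \<in> R"
      hence "i \<noteq> i0" "i \<in> {1..m}" unfolding R_def by auto
      hence "g i \<noteq> g i0" using injg by (auto dest: injD)
      thus ?thesis using i0 \<open>i \<in> {1..m}\<close> unfolding Q_def by auto
    qed
    have inQ: "det (Mx wl m (transpose 1 k \<circ> g)) = 0" if k: "k \<in> {2..n}" "k \<in> Q" for k
    proof -
      from k obtain i where i: "i \<in> {1..m}" "g i = k" unfolding Q_def by auto
      show ?thesis by (rule Mx_zero[OF wp(3) i(1)], insert i k W2 wp(1), auto simp: app tr_app)
    qed
    have nW: "det (Mx wl m (transpose 1 k \<circ> g)) = 0" if k: "k \<in> {2..n}" "k \<notin> Q" "k \<notin> W" for k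
      by (rule Mx_zero[OF wp(3) i0(1)], insert i0 k wp(1), auto simp: app tr_app)
    have "Lsum n (phid S) g = (\<Sum>k\<in>W - Q. det (Mx wl m (transpose 1 k \<circ> g)))"
      unfolding LS
    proof (rule sum.mono_neutral_right)
      show "finite {2..n}" by simp
      show "W - Q \<subseteq> {2..n}" using W2 by auto
      show "\<forall>k\<in>{2..n} - (W - Q). det (Mx wl m (transpose 1 k \<circ> g)) = 0"
      proof
        fix k assume k: "k \<in> {2..n} - (W - Q)"
        show "det (Mx wl m (transpose 1 k \<circ> g)) = 0"
        proof (cases "k \<in> Q")
          case True thus ?thesis using inQ k by auto
        next
          case False thus ?thesis using nW k by auto
        qed
      qed
    qed
    also have "\<dots> = 0"
    proof (cases "\<exists>i\<in>R. g i \<notin> W")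
      case True
      then obtain i where i: "i \<in> R" "g i \<notin> W" by auto
      show ?thesis
      proof (rule sum.neutral, intro ballI)
        fix k assume k: "k \<in> W - Q"
        show "det (Mx wl m (transpose 1 k \<circ> g)) = 0"
          by (rule Mx_zero[OF wp(3), of i], insert i k gR[OF i(1)] wp(1), auto simp: app tr_app R_def)
      qed
    next
      case False
      hence WQ: "W \<inter> Q = g ` R" using gR i0 W2 unfolding R_def Q_def by auto
      have cR: "card (g ` R) = m - 1" using injg i0 unfolding R_def
        by (subst card_image, auto simp: inj_on_def)
      have cW: "card W = Suc m" unfolding W_def m_def using wp by simp
      have "card (W - Q) = 2"
        using card_Diff_subset_Int[of "W" Q] WQ cR cW i0 wp by (auto simp: W_def)
      then obtain k1 k2 where k12: "k1 \<noteq> k2" "W - Q = {k1, k2}" by (auto simp: card_2_iff)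
      have "(\<Sum>k\<in>W - Q. det (Mx wl m (transpose 1 k \<circ> g)))
          = det (Mx wl m (transpose 1 k1 \<circ> g)) + det (Mx wl m (transpose 1 k2 \<circ> g))"
        unfolding k12(2) using k12(1) by simp
      also have "\<dots> = 0"
      proof (rule Mx_swap[OF wp(3) wp(2) k12(1) _ _ i0(1)])
        show "k1 \<in> set wl" "k2 \<in> set wl" using k12 wp(1) by auto
        show "(transpose 1 k1 \<circ> g) i0 = k1" "(transpose 1 k2 \<circ> g) i0 = k2" using i0 by (auto simp: app tr_app)
        fix i assume i: "i \<in> {1..m}" "i \<noteq> i0"
        hence iR: "i \<in> R" unfolding R_def by auto
        have "k1 \<notin> Q" "k2 \<notin> Q" using k12 by auto
        thus "(transpose 1 k1 \<circ> g) i = (transpose 1 k2 \<circ> g) i \<and> (transpose 1 k1 \<circ> g) i \<noteq> k1 \<and> (transpose 1 k1 \<circ> g) i \<noteq> k2"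
          using gR[OF iR] by (auto simp: app tr_app)
      qed
      finally show ?thesis .
    qed
    finally show ?thesis using d0 by simp
  qed
qed


definition gS :: "nat \<Rightarrow> nat set \<Rightarrow> (nat \<Rightarrow> nat)" where
  "gS n S = (SOME g. g \<in> Sym n \<and> (\<forall>i\<in>{1..card S}. g i = wlS S ! i))"

lemma card_le_n2: "S \<subseteq> {3..n} \<Longrightarrow> card S \<le> n - 2"
  using card_mono[of "{3..n}" S] by simp

lemma gS_props: assumes S: "S \<subseteq> {3..n}"
  shows "gS n S \<in> Sym n" "\<And>i. i \<in> {1..card S} \<Longrightarrow> gS n S i = wlS S ! i"
proof -
  note wp = wlS_props[OF S]
  have "\<exists>g. g permutes {1..n} \<and> (\<forall>i\<in>{1..card S}. g i = wlS S ! i)"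
  proof (rule perm_extend)
    show "finite {1..n}" by simp
    show "{1..card S} \<subseteq> {1..n}" using card_le_n2[OF S] by auto
    show "inj_on ((!) (wlS S)) {1..card S}"
      using wp(2,3) by (auto simp: inj_on_def nth_eq_iff_index_eq)
    show "(!) (wlS S) ` {1..card S} \<subseteq> {1..n}"
    proof
      fix x assume "x \<in> (!) (wlS S) ` {1..card S}"
      then obtain i where "i \<in> {1..card S}" "x = wlS S ! i" by auto
      hence "x \<in> set (wlS S)" using wp(3) by auto
      thus "x \<in> {1..n}" using wp(1) S card_le_n2[OF S] \<open>i \<in> {1..card S}\<close> by auto
    qed
  qed
  hence ex: "\<exists>g. g \<in> Sym n \<and> (\<forall>i\<in>{1..card S}. g i = wlS S ! i)" unfolding Sym_def by auto
  from someI_ex[OF ex] show "gS n S \<in> Sym n" "\<And>i. i \<in> {1..card S} \<Longrightarrow> gS n S i = wlS S ! i"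
    unfolding gS_def by auto
qed

lemma phid_diag: assumes S: "S \<subseteq> {3..n}" shows "phid S (gS n S) = 1"
proof -
  note wp = wlS_props[OF S]
  define M where "M = Mx (wlS S) (card S) (gS n S)"
  have M: "M \<in> carrier_mat (Suc (card S)) (Suc (card S))" unfolding M_def by (rule Mx_carrier)
  have ent: "i \<in> {1..card S} \<Longrightarrow> j < Suc (card S) \<Longrightarrow> M $$ (i,j) = (if i = j then 1 else 0)" for i j
    unfolding M_def Mx_def using gS_props(2)[OF S, of i] wp(2,3) by (auto simp: nth_eq_iff_index_eq)
  have ut: "upper_triangular M"
    unfolding upper_triangular_def using M ent by auto
  have dg: "M $$ (i,i) = 1" if i: "i < Suc (card S)" for i
  proof (cases "i = 0")
    case True thus ?thesis unfolding M_def Mx_def by simp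
  next
    case False thus ?thesis using ent[of i i] i by auto
  qed
  have "diag_mat M = map (\<lambda>i. 1) [0..<Suc (card S)]"
    unfolding diag_mat_def using M dg by (intro map_cong, auto)
  moreover have "prod_list (map (\<lambda>i. 1::real) xs) = 1" for xs :: "nat list" by (induct xs) auto
  ultimately have "prod_list (diag_mat M) = 1" by simp
  thus ?thesis unfolding phid_def M_def[symmetric] det_upper_triangular[OF ut M] .
qed

lemma phid_off: assumes S: "S \<subseteq> {3..n}" and S': "S' \<subseteq> {3..n}" and c: "card S' = card S" and ne: "S \<noteq> S'"
  shows "phid S' (gS n S) = 0"
proof -
  note wp = wlS_props[OF S]
  note wp' = wlS_props[OF S']
  have "\<not> S \<subseteq> S'" using card_subset_eq[OF wp'(5) _ c[symmetric]] ne by auto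
  then obtain s where s: "s \<in> S" "s \<notin> S'" by auto
  have "s \<in> set (wlS S)" using s wp(1) by auto
  then obtain i where i: "i < Suc (card S)" "wlS S ! i = s" using wp(3) by (metis in_set_conv_nth)
  have "i \<noteq> 0"
  proof
    assume "i = 0"
    have "2 \<in> set (wlS S)" using wp(1) by auto
    then obtain j where j: "j < length (wlS S)" "wlS S ! j = 2" by (metis in_set_conv_nth)
    have "sorted (wlS S)" unfolding wlS_def by simp
    from sorted_nth_mono[OF this _ j(1), of 0] have "wlS S ! 0 \<le> 2" using j by simp
    thus False using i \<open>i = 0\<close> s S by auto
  qed
  hence iI: "i \<in> {1..card S}" using i by auto
  show ?thesis unfolding phid_def
  proof (rule Mx_zero[OF wp'(3)])
    show "i \<in> {1..card S'}" using iI c by simp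
    show "gS n S i \<notin> set (wlS S')" using gS_props(2)[OF S iI] i wp'(1) s S by auto
  qed
qed

lemma sign_tr_comp: assumes g: "g \<in> Sym n" and k: "k \<in> {2..n}"
  shows "sign (transpose 1 k \<circ> g) = - sign g"
proof -
  have "permutation g" using g unfolding Sym_def by (auto simp: permutation_permutes)
  moreover have "permutation (transpose 1 k)" by (rule permutation_swap_id)
  ultimately have "sign (transpose 1 k \<circ> g) = sign (transpose (1::nat) k) * sign g" by (simp add: sign_compose)
  thus ?thesis using k by (simp add: sign_swap_id)
qed

definition phin :: "nat set \<Rightarrow> (nat \<Rightarrow> nat) \<Rightarrow> real" where
  "phin S g = real_of_int (sign g) * phid S g"

lemma phin_eig:
  assumes S: "S \<subseteq> {3..n}" and g: "g \<in> Sym n" and n2: "n \<ge> 2"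
  shows "Lsum n (phin S) g = (- (real n - 1 - real (card S))) * phin S g"
proof -
  have "Lsum n (phin S) g = (\<Sum>k\<in>{2..n}. - real_of_int (sign g) * phid S (transpose 1 k \<circ> g))"
    unfolding Lsum_def phin_def
    by (rule sum.cong[OF refl], subst sign_tr_comp[OF g], auto)
  also have "\<dots> = - real_of_int (sign g) * Lsum n (phid S) g"
    unfolding Lsum_def by (simp add: sum_distrib_left)
  also have "\<dots> = (- (real n - 1 - real (card S))) * phin S g"
    unfolding phid_eig[OF S g n2] phin_def by (simp add: algebra_simps)
  finally show ?thesis .
qed

lemma sum_point: assumes "x \<in> Sym n"
  shows "(\<Sum>g\<in>Sym n. (if g = x then 1 else 0) * f g) = (f x :: real)"
proof -
  have "(\<Sum>g\<in>Sym n. (if g = x then 1 else 0) * f g) = (\<Sum>g\<in>Sym n. if g = x then f g else 0)"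
    by (rule sum.cong, auto)
  thus ?thesis using assms by (simp add: sum.delta[OF finite_Sym])
qed

lemma pn_part:
  assumes n2: "n \<ge> 2" and l: "1 \<le> l" "l \<le> n - 1"
  shows "eigenvalue (cayley_adj_mat (Sym n) (star_transp n)) (real (n - l)) \<and>
         eig_mult (cayley_adj_mat (Sym n) (star_transp n)) (real (n - l)) \<ge> (n - 2) choose (l - 1) \<and>
         eigenvalue (cayley_adj_mat (Sym n) (star_transp n)) (- real (n - l)) \<and>
         eig_mult (cayley_adj_mat (Sym n) (star_transp n)) (- real (n - l)) \<ge> (n - 2) choose (l - 1)"
proof -
  define m where "m = l - 1"
  define I where "I = {S. S \<subseteq> {3..n} \<and> card S = m}"
  have finI: "finite I" unfolding I_def by simp
  have cI: "card I = (n - 2) choose (l - 1)" unfolding I_def m_def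
    using n_subsets[of "{3..n}" "l - 1"] by simp
  have ev: "real n - 1 - real m = real (n - l)" unfolding m_def using l by (simp add: of_nat_diff)
  let ?A = "cayley_adj_mat (Sym n) (star_transp n)"
  have tst: "(\<Sum>g\<in>Sym n. (if g = gS n S then 1 else 0) * f S' g) = f S' (gS n S)" if "S \<in> I"
    for S S' and f :: "nat set \<Rightarrow> (nat \<Rightarrow> nat) \<Rightarrow> real"
    by (rule sum_point, rule gS_props(1), insert that, auto simp: I_def)
  have offd: "S \<in> I \<Longrightarrow> S' \<in> I \<Longrightarrow> phid S' (gS n S) \<noteq> 0 \<longleftrightarrow> S = S'" for S S'
    using phid_diag[of S n] phid_off[of S n S'] unfolding I_def by auto
  have c1: "card I \<le> eig_mult ?A (real (n - l))"
  proof (rule mult_bound[where \<phi> = phid and \<psi> = "\<lambda>S g. if g = gS n S then 1 else 0"])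
    show "finite I" by fact
    fix S g assume S: "S \<in> I" and g: "g \<in> Sym n"
    show "Lsum n (phid S) g = real (n - l) * phid S g"
      using phid_eig[of S n g] S g n2 ev unfolding I_def by auto
  next
    fix S S' assume S: "S \<in> I" and S': "S' \<in> I"
    show "((\<Sum>g\<in>Sym n. (if g = gS n S then 1 else 0) * phid S' g) \<noteq> 0) = (S = S')"
      unfolding tst[OF S, of phid S'] using offd[OF S S'] .
  qed
  have c2: "card I \<le> eig_mult ?A (- real (n - l))"
  proof (rule mult_bound[where \<phi> = phin and \<psi> = "\<lambda>S g. if g = gS n S then 1 else 0"])
    show "finite I" by fact
    fix S g assume S: "S \<in> I" and g: "g \<in> Sym n"
    have cS: "card S = m" "S \<subseteq> {3..n}" using S unfolding I_def by auto
    have "Lsum n (phin S) g = (- (real n - 1 - real m)) * phin S g"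
      using phin_eig[OF cS(2) g n2] cS(1) by simp
    thus "Lsum n (phin S) g = - real (n - l) * phin S g" unfolding ev .
  next
    fix S S' assume S: "S \<in> I" and S': "S' \<in> I"
    have sg: "sign (gS n S) \<noteq> 0" by (simp add: sign_def)
    have e: "(\<Sum>g\<in>Sym n. (if g = gS n S then 1 else 0) * phin S' g) = phin S' (gS n S)"
      by (rule tst[OF S])
    show "((\<Sum>g\<in>Sym n. (if g = gS n S then 1 else 0) * phin S' g) \<noteq> 0) = (S = S')"
      unfolding e unfolding phin_def using offd[OF S S'] sg by simp
  qed
  have pos: "1 \<le> (n - 2) choose (l - 1)"
  proof -
    have "l - 1 \<le> n - 2" using l by simp
    from zero_less_binomial[OF this] show ?thesis by linarith
  qed
  show ?thesis using c1 c2 pos cI eig_of_mult[of n "real (n - l)"] eig_of_mult[of n "- real (n - l)"] by auto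
qed

theorem theorem1:
  fixes n :: nat
  assumes "n \<ge> 2"
  shows "(\<forall>l. 1 \<le> l \<and> l \<le> n - 1 \<longrightarrow>
            eigenvalue (cayley_adj_mat (Sym n) (star_transp n)) (real (n - l)) \<and>
            eig_mult (cayley_adj_mat (Sym n) (star_transp n)) (real (n - l)) \<ge> (n - 2) choose (l - 1) \<and>
            eigenvalue (cayley_adj_mat (Sym n) (star_transp n)) (- real (n - l)) \<and>
            eig_mult (cayley_adj_mat (Sym n) (star_transp n)) (- real (n - l)) \<ge> (n - 2) choose (l - 1))
         \<and> (n \<ge> 4 \<longrightarrow>
            eigenvalue (cayley_adj_mat (Sym n) (star_transp n)) 0 \<and>
            eig_mult (cayley_adj_mat (Sym n) (star_transp n)) 0 \<ge> (n - 1) choose 2)"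
  using pn_part[OF assms] zero_part by blast


end
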